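(* Assume each $L_r:Lip_d(I)\to Lip_d(I)$ ($r\in\mathbb{N}$) is linear and that there is a linear operator $L$ on $Lip_d(I)$ with $\|Lf\|_\infty=\sup_{r\in\mathbb{N}}\|L_rf\|_\infty$ for all $f\in Lip_d(I)$. Then the non-stationary fractal operator $\mathfrak{F}^\alpha_b:Lip_d(I)\to C(I)$, $\mathfrak{F}^\alpha_b(f)=f^\alpha_b$, is relatively bounded with respect to $L$: for all $f\in Lip_d(I)$, $$\|\mathfrak{F}^\alpha_b(f)\|_\infty\le\frac{1}{1-\|\alpha\|_\infty}\|f\|_\infty+\frac{\|\alpha\|_\infty}{1-\|\alpha\|_\infty}\|Lf\|_\infty,$$ so the $L$-bound of $\mathfrak{F}^\alpha_b$ is at most $\frac{\|\alpha\|_\infty}{1-\|\alpha\|_\infty}$.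
   Context: Setting: $I=[x_0,x_N]$ with partition $\Delta: x_0<x_1<\dots<x_N$, $I_i=[x_{i-1},x_i]$, $l_i:I\to I_i$ the increasing affine bijection $l_i(x)=\frac{x_i-x_{i-1}}{x_N-x_0}x+\frac{x_Nx_{i-1}-x_0x_i}{x_N-x_0}$, and $Q_i=l_i^{-1}$. Scaling functions $\alpha_{i,r}:I\to\mathbb{R}$ ($i=1,\dots,N$, $r\in\mathbb{N}$) are continuous with $\|\alpha\|_\infty:=\sup_{r}\max_i\|\alpha_{i,r}\|_\infty<1$. $Lip_d(I)$ ($0<d\le1$) is the space of real functions $g$ on $I$ with $\sup_{x\ne y}|g(x)-g(y)|/|x-y|^d<\infty$, regarded as a subset of $C(I)$ with the supremum norm. $L_r$ satisfy $(L_rg)(x_0)=g(x_0)$, $(L_rg)(x_N)=g(x_N)$ and $\sup_r\|L_r\|_\infty<\infty$ (operator norms w.r.t. the sup norm). An operator $\mathcal{T}_1$ is relatively bounded w.r.t. $\mathcal{T}_2$ if $\|\mathcal{T}_1u\|\le t_1\|u\|+t_2\|\mathcal{T}_2u\|$ for some $t_1,t_2\ge0$ and all $u$; the infimum of such $t_2$ is the $\mathcal{T}_2$-bound. Non-stationary $\alpha$-fractal function: for $f\in C(I)$ and base functions $b_r\in C(I)$ with $b_r(x_0)=f(x_0)$, $b_r(x_N)=f(x_N)$, $\sup_r\|b_r\|_\infty<\infty$, let $C_f(I)=\{g\in C(I):g(x_0)=f(x_0),g(x_N)=f(x_N)\}$ and $T^{\alpha_r}:C_f(I)\to C_f(I)$,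 $(T^{\alpha_r}g)(x)=f(x)+\alpha_{i,r}(Q_i(x))(g-b_r)(Q_i(x))$ for $x\in I_i$. For every $g\in C_f(I)$, $T^{\alpha_1}\circ\cdots\circ T^{\alpha_r}g$ converges uniformly to a function independent of $g$; this is the non-stationary $\alpha$-fractal function. $f^\alpha_b$ denotes it for $f\in Lip_d(I)$ with $b_r=L_rf$. *)

theory Defs
  imports "HOL-Analysis.Analysis"
begin

text \<open>Functions on I are represented as total functions real => real;
 only their values on I = {x 0..x N} matter.\<close>

definition supn :: "real set \<Rightarrow> (real \<Rightarrow> real) \<Rightarrow> real" where
  "supn I g = (SUP t\<in>I. \<bar>g t\<bar>)"

definition lip_space :: "real \<Rightarrow> real set \<Rightarrow> (real \<Rightarrow> real) set" where
  "lip_space d I = {g. \<exists>C. \<forall>s\<in>I. \<forall>t\<in>I. \<bar>g s - g t\<bar> \<le> C * \<bar>s - t\<bar> powr d}"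

text \<open>Q_i = l_i^{-1}, where l_i is the increasing affine bijection of [x_0,x_N] onto [x_{i-1},x_i].\<close>
definition lmap :: "(nat \<Rightarrow> real) \<Rightarrow> nat \<Rightarrow> nat \<Rightarrow> real \<Rightarrow> real" where
  "lmap x N i t = (x i - x (i - 1)) / (x N - x 0) * t + (x N * x (i - 1) - x 0 * x i) / (x N - x 0)"

definition Qmap :: "(nat \<Rightarrow> real) \<Rightarrow> nat \<Rightarrow> nat \<Rightarrow> real \<Rightarrow> real" where
  "Qmap x N i t = ((x N - x 0) * t - (x N * x (i - 1) - x 0 * x i)) / (x i - x (i - 1))"

definition subint :: "(nat \<Rightarrow> real) \<Rightarrow> real \<Rightarrow> nat" where
  "subint x t = (LEAST i. 1 \<le> i \<and> t \<le> x i)"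

definition RB_op :: "(nat \<Rightarrow> real) \<Rightarrow> nat \<Rightarrow> (nat \<Rightarrow> real \<Rightarrow> real) \<Rightarrow> (real \<Rightarrow> real)
    \<Rightarrow> (real \<Rightarrow> real) \<Rightarrow> (real \<Rightarrow> real) \<Rightarrow> real \<Rightarrow> real" where
  "RB_op x N alpha_r f b_r g t =
     (let i = subint x t; q = Qmap x N i t in f t + alpha_r i q * (g q - b_r q))"

fun comp_upto :: "(nat \<Rightarrow> (real \<Rightarrow> real) \<Rightarrow> (real \<Rightarrow> real)) \<Rightarrow> nat \<Rightarrow> (real \<Rightarrow> real) \<Rightarrow> (real \<Rightarrow> real)" where
  "comp_upto T 0 = id"
| "comp_upto T (Suc r) = comp_upto T r \<circ> T (Suc r)"

text \<open>Non-stationary alpha-fractal function f^\<alpha>_b with b_r = L_r f (r \<ge> 1): the limit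
 of T^{\<alpha>_1} \<circ> ... \<circ> T^{\<alpha>_r} g, evaluated with the seed g = f \<in> C_f(I).\<close>
definition fractal_fun :: "(nat \<Rightarrow> real) \<Rightarrow> nat \<Rightarrow> (nat \<Rightarrow> nat \<Rightarrow> real \<Rightarrow> real)
    \<Rightarrow> (nat \<Rightarrow> (real \<Rightarrow> real) \<Rightarrow> (real \<Rightarrow> real)) \<Rightarrow> (real \<Rightarrow> real) \<Rightarrow> real \<Rightarrow> real" where
  "fractal_fun x N alpha Ls f t =
     lim (\<lambda>r. comp_upto (\<lambda>k. RB_op x N (alpha k) f (Ls k f)) r f t)"

definition alpha_norm :: "(nat \<Rightarrow> real) \<Rightarrow> nat \<Rightarrow> (nat \<Rightarrow> nat \<Rightarrow> real \<Rightarrow> real) \<Rightarrow> real" where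
  "alpha_norm x N alpha = (SUP (r, i)\<in>{1..} \<times> {1..N}. supn {x 0..x N} (alpha r i))"

end

theory Submission
  imports Defs
begin


lemma conv_from_diff:
  fixes X :: "nat \<Rightarrow> real"
  assumes "\<And>n. \<bar>X (Suc n) - X n\<bar> \<le> C * a ^ n" "0 \<le> a" "a < 1"
  shows "convergent X"
proof -
  have "summable (\<lambda>n. C * a ^ n)" using assms by (intro summable_mult summable_geometric) auto
  hence "summable (\<lambda>n. X (Suc n) - X n)"
    by (rule summable_comparison_test[rotated]) (use assms in auto)
  hence "convergent (\<lambda>n. \<Sum>i<n. X (Suc i) - X i)" by (simp add: summable_iff_convergent)
  hence "convergent (\<lambda>n. X n - X 0)" by (simp add: sum_lessThan_telescope)
  hence "convergent (\<lambda>n. X n - X 0 + X 0)" by (rule convergent_add) (simp add: convergent_const)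
  thus ?thesis by simp
qed

lemma x_mono:
  fixes x :: "nat \<Rightarrow> real"
  assumes part: "\<And>i. i < N \<Longrightarrow> x i < x (Suc i)"
  shows "i \<le> j \<Longrightarrow> j \<le> N \<Longrightarrow> x i \<le> x j"
proof (induction j)
  case 0 then show ?case by simp
next
  case (Suc j)
  show ?case
  proof (cases "i = Suc j")
    case False
    then have "x i \<le> x j" using Suc by auto
    also have "x j < x (Suc j)" using part Suc by auto
    finally show ?thesis by simp
  qed simp
qed

lemma subint_props:
  fixes x :: "nat \<Rightarrow> real"
  assumes N: "1 \<le> N" and part: "\<And>i. i < N \<Longrightarrow> x i < x (Suc i)"
    and t: "t \<in> {x 0..x N}"
  shows "1 \<le> subint x t \<and> subint x t \<le> N \<and> x (subint x t - 1) \<le> t \<and> t \<le> x (subint x t)"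
proof -
  let ?P = "\<lambda>i. 1 \<le> i \<and> t \<le> x i"
  have PN: "?P N" using N t by auto
  have P: "?P (subint x t)" unfolding subint_def by (rule LeastI[of ?P N, OF PN])
  have le: "subint x t \<le> N" unfolding subint_def by (rule Least_le[of ?P N, OF PN])
  have "x (subint x t - 1) \<le> t"
  proof (cases "subint x t = 1")
    case True then show ?thesis using t by simp
  next
    case False
    then have "subint x t - 1 < subint x t" "1 \<le> subint x t - 1" using P by auto
    then have "\<not> ?P (subint x t - 1)" using not_less_Least[of "subint x t - 1" ?P] unfolding subint_def by blast
    then show ?thesis using \<open>1 \<le> subint x t - 1\<close> by auto
  qed
  then show ?thesis using P le by auto
qed

lemma Qmap_in:
  fixes x :: "nat \<Rightarrow> real"
  assumes N: "1 \<le> N" and part: "\<And>i. i < N \<Longrightarrow> x i < x (Suc i)"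
    and t: "t \<in> {x 0..x N}"
  shows "Qmap x N (subint x t) t \<in> {x 0..x N}"
proof -
  define i where "i = subint x t"
  have P: "1 \<le> i" "i \<le> N" "x (i - 1) \<le> t" "t \<le> x i"
    using subint_props[where x=x and N=N, OF N part t] unfolding i_def by auto
  have ab: "x (i - 1) < x i" using part[of "i - 1"] P by auto
  have x0N: "x 0 \<le> x N" using x_mono[where x=x and N=N and i=0 and j=N, OF part] by simp
  define a where "a = x (i - 1)"
  define b where "b = x i"
  have ab': "a < b" "a \<le> t" "t \<le> b" using ab P unfolding a_def b_def by auto
  have Q: "Qmap x N i t = ((x N - x 0) * t - (x N * a - x 0 * b)) / (b - a)"
    unfolding Qmap_def a_def b_def by simp
  have h1: "0 \<le> (x N - x 0) * (t - a)" using x0N ab' by auto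
  have h2: "0 \<le> (x N - x 0) * (b - t)" using x0N ab' by auto
  have "x 0 \<le> ((x N - x 0) * t - (x N * a - x 0 * b)) / (b - a)"
    using ab' h1 by (simp add: field_simps)
  moreover have "((x N - x 0) * t - (x N * a - x 0 * b)) / (b - a) \<le> x N"
    using ab' h2 by (simp add: field_simps)
  ultimately show ?thesis using Q unfolding i_def by simp
qed

lemma lip_bdd:
  assumes g: "g \<in> lip_space d {a..b}" and d: "0 < d" and ab: "a \<le> b"
  shows "bdd_above ((\<lambda>t. \<bar>g t\<bar>) ` {a..b})"
proof -
  obtain C where C: "\<forall>s\<in>{a..b}. \<forall>t\<in>{a..b}. \<bar>g s - g t\<bar> \<le> C * \<bar>s - t\<bar> powr d"
    using g unfolding lip_space_def by auto
  have "\<bar>g t\<bar> \<le> \<bar>g a\<bar> + \<bar>C\<bar> * (b - a) powr d" if t: "t \<in> {a..b}" for t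
  proof -
    have "\<bar>g t - g a\<bar> \<le> C * \<bar>t - a\<bar> powr d" using C t ab by (meson atLeastAtMost_iff order_refl)
    also have "\<dots> \<le> \<bar>C\<bar> * \<bar>t - a\<bar> powr d" by (simp add: mult_right_mono)
    also have "\<dots> \<le> \<bar>C\<bar> * (b - a) powr d"
      using t d by (intro mult_left_mono powr_mono2) auto
    finally show ?thesis by linarith
  qed
  then show ?thesis by (intro bdd_aboveI2) auto
qed

lemma supn_ge:
  assumes "bdd_above ((\<lambda>t. \<bar>g t\<bar>) ` I)" "t \<in> I"
  shows "\<bar>g t\<bar> \<le> supn I g"
  unfolding supn_def using assms by (rule cSUP_upper2[where x=t]) auto

theorem mainTheorem7:
  fixes x :: "nat \<Rightarrow> real" and N :: nat and d :: real
    and alpha :: "nat \<Rightarrow> nat \<Rightarrow> real \<Rightarrow> real"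
    and Ls :: "nat \<Rightarrow> (real \<Rightarrow> real) \<Rightarrow> (real \<Rightarrow> real)"
    and L :: "(real \<Rightarrow> real) \<Rightarrow> (real \<Rightarrow> real)"
    and f :: "real \<Rightarrow> real"
  defines "I \<equiv> {x 0..x N}"
  assumes N: "1 \<le> N"
    and part: "\<And>i. i < N \<Longrightarrow> x i < x (Suc i)"
    and d: "0 < d" "d \<le> 1"
    and alpha_cont: "\<And>r i. 1 \<le> r \<Longrightarrow> 1 \<le> i \<Longrightarrow> i \<le> N \<Longrightarrow> continuous_on I (alpha r i)"
    and alpha_bdd: "bdd_above ((\<lambda>(r, i). supn I (alpha r i)) ` ({1..} \<times> {1..N}))"
    and alpha_lt1: "alpha_norm x N alpha < 1"
    and Ls_maps: "\<And>r g. 1 \<le> r \<Longrightarrow> g \<in> lip_space d I \<Longrightarrow> Ls r g \<in> lip_space d I"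
    and Ls_welldef: "\<And>r g h. 1 \<le> r \<Longrightarrow> g \<in> lip_space d I \<Longrightarrow> h \<in> lip_space d I \<Longrightarrow>
        (\<forall>t\<in>I. g t = h t) \<Longrightarrow> (\<forall>t\<in>I. Ls r g t = Ls r h t)"
    and Ls_linear: "\<And>r g h a c t. 1 \<le> r \<Longrightarrow> g \<in> lip_space d I \<Longrightarrow> h \<in> lip_space d I \<Longrightarrow> t \<in> I \<Longrightarrow>
        Ls r (\<lambda>s. a * g s + c * h s) t = a * Ls r g t + c * Ls r h t"
    and Ls_ends: "\<And>r g. 1 \<le> r \<Longrightarrow> g \<in> lip_space d I \<Longrightarrow>
        Ls r g (x 0) = g (x 0) \<and> Ls r g (x N) = g (x N)"
    and Ls_bdd: "\<exists>M. \<forall>r\<ge>1. \<forall>g\<in>lip_space d I. supn I (Ls r g) \<le> M * supn I g"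
    and L_maps: "\<And>g. g \<in> lip_space d I \<Longrightarrow> L g \<in> lip_space d I"
    and L_welldef: "\<And>g h. g \<in> lip_space d I \<Longrightarrow> h \<in> lip_space d I \<Longrightarrow>
        (\<forall>t\<in>I. g t = h t) \<Longrightarrow> (\<forall>t\<in>I. L g t = L h t)"
    and L_linear: "\<And>g h a c t. g \<in> lip_space d I \<Longrightarrow> h \<in> lip_space d I \<Longrightarrow> t \<in> I \<Longrightarrow>
        L (\<lambda>s. a * g s + c * h s) t = a * L g t + c * L h t"
    and L_sup: "\<And>g. g \<in> lip_space d I \<Longrightarrow> supn I (L g) = (SUP r\<in>{1..}. supn I (Ls r g))"
    and f: "f \<in> lip_space d I"
  shows "supn I (fractal_fun x N alpha Ls f)
     \<le> 1 / (1 - alpha_norm x N alpha) * supn I f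
       + alpha_norm x N alpha / (1 - alpha_norm x N alpha) * supn I (L f)"
  proof -
  let ?a = "alpha_norm x N alpha"
  define T where "T = (\<lambda>k. RB_op x N (alpha k) f (Ls k f))"
  define F where "F = (\<lambda>r. comp_upto T r f)"
  define nf where "nf = supn I f"
  define M where "M = supn I (L f)"
  have x0N: "x 0 \<le> x N" using x_mono[where x=x and N=N and i=0 and j=N, OF part] by simp
  have Ine: "x 0 \<in> I" using x0N unfolding I_def by simp
  have fbdd: "bdd_above ((\<lambda>t. \<bar>f t\<bar>) ` I)" using lip_bdd[OF f[unfolded I_def] d(1) x0N] I_def by simp
  have f_le: "\<bar>f t\<bar> \<le> nf" if "t \<in> I" for t unfolding nf_def using fbdd that by (rule supn_ge)
  have nf0: "0 \<le> nf" using f_le[OF Ine] by simp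
  have alpha_le: "\<bar>alpha k i q\<bar> \<le> ?a" if "1 \<le> k" "1 \<le> i" "i \<le> N" "q \<in> I" for k i q
  proof -
    have "compact I" unfolding I_def by simp
    then have "bounded (alpha k i ` I)" using alpha_cont[OF that(1-3)]
      by (intro compact_imp_bounded compact_continuous_image)
    then have bd: "bdd_above ((\<lambda>t. \<bar>alpha k i t\<bar>) ` I)"
      by (auto simp: bounded_iff bdd_above_def)
    have "\<bar>alpha k i q\<bar> \<le> supn I (alpha k i)" using bd that(4) by (rule supn_ge)
    also have "\<dots> \<le> ?a" unfolding alpha_norm_def
      using alpha_bdd that(1-3) unfolding I_def
      by (intro cSUP_upper2[where x="(k, i)"]) auto
    finally show ?thesis .
  qed
  have a0: "0 \<le> ?a" using alpha_le[of 1 1 "x 0"] N Ine by auto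
  have a1: "?a < 1" by (rule alpha_lt1)
  obtain M0 where M0: "\<forall>r\<ge>1. \<forall>g\<in>lip_space d I. supn I (Ls r g) \<le> M0 * supn I g" using Ls_bdd by auto
  have Ls_le: "\<bar>Ls k f q\<bar> \<le> M" if "1 \<le> k" "q \<in> I" for k q
  proof -
    have "bdd_above ((\<lambda>t. \<bar>Ls k f t\<bar>) ` I)"
      using lip_bdd[OF Ls_maps[OF that(1) f, unfolded I_def] d(1) x0N] I_def by simp
    then have "\<bar>Ls k f q\<bar> \<le> supn I (Ls k f)" using that(2) by (rule supn_ge)
    also have "\<dots> \<le> (SUP r\<in>{1..}. supn I (Ls r f))"
      using M0 f that(1) by (intro cSUP_upper2[where x=k]) (auto intro!: bdd_aboveI2)
    also have "\<dots> = M" unfolding M_def using L_sup[OF f] by simp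
    finally show ?thesis .
  qed
  have M0': "0 \<le> M" using Ls_le[of 1 "x 0"] Ine by auto
  have Tdef: "T k g t = f t + alpha k (subint x t) (Qmap x N (subint x t) t) * (g (Qmap x N (subint x t) t) - Ls k f (Qmap x N (subint x t) t))"
    for k g t unfolding T_def RB_op_def Let_def by simp
  have sub: "1 \<le> subint x t \<and> subint x t \<le> N" if "t \<in> I" for t
    using subint_props[where x=x and N=N, OF N part, of t] that unfolding I_def by auto
  have qI: "Qmap x N (subint x t) t \<in> I" if "t \<in> I" for t
    using Qmap_in[where x=x and N=N, OF N part, of t] that unfolding I_def by auto
  define B where "B = (nf + ?a * M) / (1 - ?a)"
  have Binv: "nf + ?a * (B + M) = B" unfolding B_def using a1 by (simp add: field_simps)
  have nfB: "nf \<le> B"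
  proof -
    have "nf * (1 - ?a) \<le> nf + ?a * M" using a0 nf0 M0' by (simp add: algebra_simps)
    then show ?thesis unfolding B_def using a1 by (simp add: field_simps)
  qed
  have Tbound: "\<bar>T k g t\<bar> \<le> B" if "1 \<le> k" "\<forall>s\<in>I. \<bar>g s\<bar> \<le> B" "t \<in> I" for k g t
  proof -
    define q where "q = Qmap x N (subint x t) t"
    have q: "q \<in> I" using qI[OF that(3)] q_def by simp
    have al: "\<bar>alpha k (subint x t) q\<bar> \<le> ?a" using alpha_le[OF that(1) _ _ q] sub[OF that(3)] by auto
    have "\<bar>g q - Ls k f q\<bar> \<le> B + M" using bspec[OF that(2) q] Ls_le[OF that(1) q] by linarith
    then have "\<bar>alpha k (subint x t) q\<bar> * \<bar>g q - Ls k f q\<bar> \<le> ?a * (B + M)"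
      using al by (intro mult_mono) auto
    then have "\<bar>T k g t\<bar> \<le> \<bar>f t\<bar> + ?a * (B + M)"
      unfolding Tdef q_def[symmetric] using abs_triangle_ineq[of "f t" "alpha k (subint x t) q * (g q - Ls k f q)"]
      by (simp add: abs_mult)
    then show ?thesis using f_le[OF that(3)] Binv by linarith
  qed
  have Tcontr: "\<bar>T k g t - T k h t\<bar> \<le> ?a * D" if "1 \<le> k" "\<forall>s\<in>I. \<bar>g s - h s\<bar> \<le> D" "t \<in> I" for k g h D t
  proof -
    define q where "q = Qmap x N (subint x t) t"
    have q: "q \<in> I" using qI[OF that(3)] q_def by simp
    have al: "\<bar>alpha k (subint x t) q\<bar> \<le> ?a" using alpha_le[OF that(1) _ _ q] sub[OF that(3)] by auto
    have "T k g t - T k h t = alpha k (subint x t) q * (g q - h q)"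
      unfolding Tdef q_def[symmetric] by (simp add: algebra_simps)
    also have "\<bar>\<dots>\<bar> \<le> ?a * D" unfolding abs_mult using al that(2) q by (intro mult_mono) auto
    finally show ?thesis .
  qed
  have comp_bound: "\<forall>g::real\<Rightarrow>real. (\<forall>s\<in>I. \<bar>g s\<bar> \<le> B) \<longrightarrow> (\<forall>t\<in>I. \<bar>comp_upto T r g t\<bar> \<le> B)" for r
  proof (induction r)
    case 0 then show ?case by simp
  next
    case (Suc r)
    show ?case
    proof (intro allI impI)
      fix g :: "real \<Rightarrow> real" assume g: "\<forall>s\<in>I. \<bar>g s\<bar> \<le> B"
      have "\<forall>s\<in>I. \<bar>T (Suc r) g s\<bar> \<le> B" using Tbound g by auto
      then show "\<forall>t\<in>I. \<bar>comp_upto T (Suc r) g t\<bar> \<le> B" using Suc by simp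
    qed
  qed
  have comp_contr: "\<forall>(g::real\<Rightarrow>real) h (D::real). (\<forall>s\<in>I. \<bar>g s - h s\<bar> \<le> D) \<longrightarrow> (\<forall>t\<in>I. \<bar>comp_upto T r g t - comp_upto T r h t\<bar> \<le> ?a ^ r * D)" for r
  proof (induction r)
    case 0 then show ?case by simp
  next
    case (Suc r)
    show ?case
    proof (intro allI impI)
      fix g h :: "real \<Rightarrow> real" and D :: real assume g: "\<forall>s\<in>I. \<bar>g s - h s\<bar> \<le> D"
      have "\<forall>s\<in>I. \<bar>T (Suc r) g s - T (Suc r) h s\<bar> \<le> ?a * D" using Tcontr g by auto
      then have "\<forall>t\<in>I. \<bar>comp_upto T r (T (Suc r) g) t - comp_upto T r (T (Suc r) h) t\<bar> \<le> ?a ^ r * (?a * D)"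
        using Suc by blast
      then show "\<forall>t\<in>I. \<bar>comp_upto T (Suc r) g t - comp_upto T (Suc r) h t\<bar> \<le> ?a ^ Suc r * D"
        by (simp add: algebra_simps)
    qed
  qed
  have fB: "\<forall>s\<in>I. \<bar>f s\<bar> \<le> B" using f_le nfB by force
  have FB: "\<bar>F r t\<bar> \<le> B" if "t \<in> I" for r t using comp_bound fB that unfolding F_def by blast
  have Fdiff: "\<bar>F (Suc r) t - F r t\<bar> \<le> 2 * B * ?a ^ r" if "t \<in> I" for r t
  proof -
    have "\<forall>s\<in>I. \<bar>T (Suc r) f s - f s\<bar> \<le> 2 * B"
      using Tbound[of "Suc r" f] fB by fastforce
    then have "\<bar>comp_upto T r (T (Suc r) f) t - comp_upto T r f t\<bar> \<le> ?a ^ r * (2 * B)"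
      using comp_contr that by blast
    then show ?thesis unfolding F_def by (simp add: algebra_simps)
  qed
  have ff: "\<bar>fractal_fun x N alpha Ls f t\<bar> \<le> B" if t: "t \<in> I" for t
  proof -
    have "convergent (\<lambda>r. F r t)" using Fdiff[OF t] a0 a1 by (intro conv_from_diff) auto
    then have lim: "(\<lambda>r. F r t) \<longlonglongrightarrow> fractal_fun x N alpha Ls f t"
      unfolding fractal_fun_def F_def T_def by (simp add: convergent_LIMSEQ_iff)
    have "(\<lambda>r. \<bar>F r t\<bar>) \<longlonglongrightarrow> \<bar>fractal_fun x N alpha Ls f t\<bar>" by (rule tendsto_rabs[OF lim])
    then show ?thesis using FB[OF t] by (intro Lim_bounded[where M=0]) auto
  qed
  have "supn I (fractal_fun x N alpha Ls f) \<le> B"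
    unfolding supn_def using Ine ff by (intro cSUP_least) auto
  also have "B = 1 / (1 - ?a) * nf + ?a / (1 - ?a) * M" unfolding B_def by (simp add: add_divide_distrib algebra_simps)
  finally show ?thesis unfolding nf_def M_def .
qed

end
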